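(* Let $\mathbf T:=\mathbf T_0^{\otimes m}$ with rows and columns indexed by $\mathcal X=\{0,1\}^m$. For $\sigma\in\mathcal S_m$ let $\mathbf P_\sigma$ be the permutation matrix with $\mathbf P_\sigma\mathbf e_{(x_1,\dots,x_m)}=\mathbf e_{(x_{\sigma(1)},\dots,x_{\sigma(m)})}$ for all $(x_1,\dots,x_m)\in\mathcal X$. Then $$\mathrm{Aut}(\mathbf T)=\{\mathbf P_\sigma:\sigma\in\mathcal S_m\},$$ and consequently $\mathrm{Aut}(\mathbf T)\cong\mathcal S_m$ and $|\mathrm{Aut}(\mathbf T)|=m!$.
   Context: $\mathbf T_0=\begin{pmatrix}1&0\\1&1\end{pmatrix}$; rows/columns of $\mathbf T_0^{\otimes m}$ are indexed by $x\in\{0,1\}^m$ via the Kronecker rule $(\mathbf A\otimes\mathbf B)_{(x_1,x'),(y_1,y')}=\mathbf A_{x_1,y_1}\mathbf B_{x',y'}$. $\mathrm{Aut}(\mathbf T)$ is the set of permutation matrices $\mathbf P$ with $\mathbf P^\top\mathbf T\mathbf P=\mathbf T$. $\mathcal S_m$ is the symmetric group on $[m]$; $\mathbf e_x$ is the standard basis vector indexed by $x$. *)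

theory Defs
  imports "HOL-Algebra.Sym_Groups"
begin

text \<open>Index set X = {0,1}^m, encoded as boolean lists of length m
  (False = 0, True = 1; list position i-1 holds coordinate x_i).
  Square matrices indexed by X are functions X => X => int, required to
  vanish outside X x X.\<close>

definition idx :: "nat \<Rightarrow> bool list set" where
  "idx m = {x. length x = m}"

definition bit :: "bool \<Rightarrow> nat" where
  "bit b = (if b then 1 else 0)"

definition T0 :: "nat \<Rightarrow> nat \<Rightarrow> int" where
  "T0 a b = (if (a, b) = (0, 1) then 0 else 1)"

text \<open>Kronecker power T0^{\<otimes>m} via the Kronecker rule.\<close>
definition Tm :: "nat \<Rightarrow> bool list \<Rightarrow> bool list \<Rightarrow> int" where
  "Tm m x y = (if x \<in> idx m \<and> y \<in> idx m
     then (\<Prod>i<m. T0 (bit (x ! i)) (bit (y ! i))) else 0)"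

definition mmul :: "nat \<Rightarrow> (bool list \<Rightarrow> bool list \<Rightarrow> int) \<Rightarrow> (bool list \<Rightarrow> bool list \<Rightarrow> int)
    \<Rightarrow> bool list \<Rightarrow> bool list \<Rightarrow> int" where
  "mmul m A B = (\<lambda>x y. if x \<in> idx m \<and> y \<in> idx m then (\<Sum>z\<in>idx m. A x z * B z y) else 0)"

definition mtrans :: "(bool list \<Rightarrow> bool list \<Rightarrow> int) \<Rightarrow> bool list \<Rightarrow> bool list \<Rightarrow> int" where
  "mtrans A = (\<lambda>x y. A y x)"

definition mone :: "nat \<Rightarrow> bool list \<Rightarrow> bool list \<Rightarrow> int" where
  "mone m = (\<lambda>x y. if x \<in> idx m \<and> y = x then 1 else 0)"

definition perm_matrix :: "nat \<Rightarrow> (bool list \<Rightarrow> bool list \<Rightarrow> int) \<Rightarrow> bool" where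
  "perm_matrix m P \<longleftrightarrow>
     (\<forall>x y. P x y = 0 \<or> P x y = 1) \<and>
     (\<forall>x y. \<not> (x \<in> idx m \<and> y \<in> idx m) \<longrightarrow> P x y = 0) \<and>
     (\<forall>x\<in>idx m. \<exists>!y. y \<in> idx m \<and> P x y = 1) \<and>
     (\<forall>y\<in>idx m. \<exists>!x. x \<in> idx m \<and> P x y = 1)"

definition Aut :: "nat \<Rightarrow> (bool list \<Rightarrow> bool list \<Rightarrow> int) \<Rightarrow> (bool list \<Rightarrow> bool list \<Rightarrow> int) set" where
  "Aut m T = {P. perm_matrix m P \<and> mmul m (mtrans P) (mmul m T P) = T}"

definition Aut_group :: "nat \<Rightarrow> (bool list \<Rightarrow> bool list \<Rightarrow> int) \<Rightarrow> (bool list \<Rightarrow> bool list \<Rightarrow> int) monoid" where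
  "Aut_group m T = \<lparr> carrier = Aut m T, mult = mmul m, one = mone m \<rparr>"

definition Psig :: "nat \<Rightarrow> (nat \<Rightarrow> nat) \<Rightarrow> bool list \<Rightarrow> bool list \<Rightarrow> int" where
  "Psig m \<sigma> = (\<lambda>y x. if x \<in> idx m \<and> y \<in> idx m \<and> y = map (\<lambda>i. x ! (\<sigma> i - 1)) [1..<m+1]
                      then 1 else 0)"

end

theory Submission
  imports Defs
begin


definition leq :: "nat \<Rightarrow> bool list \<Rightarrow> bool list \<Rightarrow> bool" where
  "leq m a b = (\<forall>i<m. a ! i \<longrightarrow> b ! i)"

definition PM :: "nat \<Rightarrow> (bool list \<Rightarrow> bool list) \<Rightarrow> bool list \<Rightarrow> bool list \<Rightarrow> int" where
  "PM m f = (\<lambda>x y. if x \<in> idx m \<and> y \<in> idx m \<and> x = f y then 1 else 0)"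

definition gs :: "nat \<Rightarrow> (nat \<Rightarrow> nat) \<Rightarrow> bool list \<Rightarrow> bool list" where
  "gs m \<sigma> x = map (\<lambda>i. x ! (\<sigma> i - 1)) [1..<m+1]"

lemma finite_idx: "finite (idx m)"
proof -
  have "idx m = {xs. set xs \<subseteq> (UNIV::bool set) \<and> length xs = m}" by (auto simp: idx_def)
  thus ?thesis using finite_lists_length_eq[of "UNIV::bool set" m] by simp
qed

lemma Tm_alt: "Tm m x y = (if x \<in> idx m \<and> y \<in> idx m then (if leq m y x then 1 else 0) else 0)"
proof (cases "x \<in> idx m \<and> y \<in> idx m")
  case True
  show ?thesis
  proof (cases "leq m y x")
    case True
    hence "\<forall>i\<in>{..<m}. T0 (bit (x ! i)) (bit (y ! i)) = 1"
      by (auto simp: leq_def T0_def bit_def)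
    then show ?thesis using \<open>x \<in> idx m \<and> y \<in> idx m\<close> True by (simp add: Tm_def)
  next
    case False
    then obtain i where "i < m" "y ! i" "\<not> x ! i" by (auto simp: leq_def)
    hence "\<exists>i\<in>{..<m}. T0 (bit (x ! i)) (bit (y ! i)) = 0"
      by (auto simp: T0_def bit_def)
    hence "(\<Prod>i<m. T0 (bit (x ! i)) (bit (y ! i))) = 0" by (simp add: prod_zero)
    then show ?thesis using \<open>x \<in> idx m \<and> y \<in> idx m\<close> False by (simp add: Tm_def)
  qed
qed (auto simp: Tm_def)

lemma Psig_PM: "Psig m \<sigma> = PM m (gs m \<sigma>)"
  by (auto simp: Psig_def PM_def gs_def fun_eq_iff)

lemma PM_cong: "(\<And>y. y \<in> idx m \<Longrightarrow> f y = g y) \<Longrightarrow> PM m f = PM m g"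
  by (auto simp: PM_def fun_eq_iff)

lemma perm_matrix_PM: "bij_betw f (idx m) (idx m) \<Longrightarrow> perm_matrix m (PM m f)"
proof -
  assume b: "bij_betw f (idx m) (idx m)"
  have fi: "f y \<in> idx m" if "y \<in> idx m" for y using b that bij_betwE by blast
  have inj: "inj_on f (idx m)" using b bij_betw_def by blast
  have sur: "\<exists>y\<in>idx m. x = f y" if "x \<in> idx m" for x
    using b that bij_betw_imp_surj_on by blast
  show ?thesis
    unfolding perm_matrix_def
  proof (intro conjI ballI allI impI)
    fix x y show "PM m f x y = 0 \<or> PM m f x y = 1" by (simp add: PM_def)
  next
    fix x y assume "\<not> (x \<in> idx m \<and> y \<in> idx m)" then show "PM m f x y = 0" by (auto simp: PM_def)
  next
    fix x assume x: "x \<in> idx m"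
    then obtain y where y: "y \<in> idx m" "x = f y" using sur by blast
    show "\<exists>!y. y \<in> idx m \<and> PM m f x y = 1"
    proof (rule ex1I[of _ y])
      show "y \<in> idx m \<and> PM m f x y = 1" using x y by (simp add: PM_def)
    next
      fix z assume "z \<in> idx m \<and> PM m f x z = 1"
      then have "z \<in> idx m" "x = f z" by (auto simp: PM_def split: if_splits)
      then show "z = y" using inj y inj_onD by metis
    qed
  next
    fix y assume y: "y \<in> idx m"
    show "\<exists>!x. x \<in> idx m \<and> PM m f x y = 1"
    proof (rule ex1I[of _ "f y"])
      show "f y \<in> idx m \<and> PM m f (f y) y = 1" using y fi by (simp add: PM_def)
    next
      fix z assume "z \<in> idx m \<and> PM m f z y = 1"
      then show "z = f y" by (auto simp: PM_def split: if_splits)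
    qed
  qed
qed

lemma perm_matrix_PM_ex:
  assumes "perm_matrix m P"
  shows "\<exists>f. bij_betw f (idx m) (idx m) \<and> P = PM m f"
proof -
  have p01: "P x y = 0 \<or> P x y = 1" for x y using assms unfolding perm_matrix_def by blast
  have pout: "P x y = 0" if "\<not> (x \<in> idx m \<and> y \<in> idx m)" for x y
    using assms that unfolding perm_matrix_def by blast
  have prow: "\<exists>!y. y \<in> idx m \<and> P x y = 1" if "x \<in> idx m" for x
    using assms that unfolding perm_matrix_def by blast
  have pcol: "\<exists>!x. x \<in> idx m \<and> P x y = 1" if "y \<in> idx m" for y
    using assms that unfolding perm_matrix_def by blast
  define f where "f y = (THE x. x \<in> idx m \<and> P x y = 1)" for y
  have f1: "f y \<in> idx m \<and> P (f y) y = 1" if "y \<in> idx m" for y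
    using theI'[OF pcol[OF that]] unfolding f_def by blast
  have f2: "x = f y" if "y \<in> idx m" "x \<in> idx m" "P x y = 1" for x y
  proof -
    have "f y \<in> idx m \<and> P (f y) y = 1" using f1 that by blast
    then show ?thesis using pcol[OF that(1)] that by blast
  qed
  have "P = PM m f"
  proof (intro ext)
    fix x y
    show "P x y = PM m f x y"
    proof (cases "x \<in> idx m \<and> y \<in> idx m")
      case True
      show ?thesis
      proof (cases "P x y = 1")
        case True
        then show ?thesis using f2 \<open>x \<in> idx m \<and> y \<in> idx m\<close> by (simp add: PM_def)
      next
        case False
        then have "P x y = 0" using p01 by blast
        moreover have "x \<noteq> f y" using f1 \<open>x \<in> idx m \<and> y \<in> idx m\<close> False by auto
        ultimately show ?thesis by (simp add: PM_def)
      qed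
    next
      case False
      then show ?thesis using pout by (auto simp: PM_def)
    qed
  qed
  moreover have "bij_betw f (idx m) (idx m)"
  proof (rule bij_betw_imageI)
    show "inj_on f (idx m)"
    proof (rule inj_onI)
      fix a b assume ab: "a \<in> idx m" "b \<in> idx m" "f a = f b"
      have "f a \<in> idx m" "P (f a) a = 1" "P (f a) b = 1" using f1[OF ab(1)] f1[OF ab(2)] ab(3) by auto
      then show "a = b" using prow[of "f a"] ab by blast
    qed
    show "f ` idx m = idx m"
    proof
      show "f ` idx m \<subseteq> idx m" using f1 by auto
      show "idx m \<subseteq> f ` idx m"
      proof
        fix x assume "x \<in> idx m"
        then obtain y where "y \<in> idx m" "P x y = 1" using prow by blast
        then show "x \<in> f ` idx m" using f2 \<open>x \<in> idx m\<close> by blast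
      qed
    qed
  qed
  ultimately show ?thesis by blast
qed

lemma sum_delta_idx:
  assumes "c \<in> idx m"
  shows "(\<Sum>z\<in>idx m. A z * (if z = c then 1 else 0)) = (A c :: int)"
proof -
  have "(\<Sum>z\<in>idx m. A z * (if z = c then 1 else 0)) = (\<Sum>z\<in>idx m. if c = z then A z else 0)"
    by (intro sum.cong) auto
  also have "\<dots> = A c" using assms finite_idx by (simp add: sum.delta)
  finally show ?thesis .
qed

lemma mmul_PM:
  assumes "g ` idx m \<subseteq> idx m"
  shows "mmul m (PM m f) (PM m g) = PM m (f \<circ> g)"
proof (intro ext)
  fix x y
  show "mmul m (PM m f) (PM m g) x y = PM m (f \<circ> g) x y"
  proof (cases "x \<in> idx m \<and> y \<in> idx m")
    case True
    hence gy: "g y \<in> idx m" using assms by auto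
    have "mmul m (PM m f) (PM m g) x y = (\<Sum>z\<in>idx m. PM m f x z * (if z = g y then 1 else 0))"
      using True by (auto simp: mmul_def PM_def intro!: sum.cong)
    also have "\<dots> = PM m f x (g y)" using sum_delta_idx[OF gy] .
    finally show ?thesis using True gy by (simp add: PM_def)
  qed (auto simp: mmul_def PM_def)
qed

lemma Aut_cond:
  assumes "f ` idx m \<subseteq> idx m"
  shows "mmul m (mtrans (PM m f)) (mmul m T (PM m f)) =
     (\<lambda>x y. if x \<in> idx m \<and> y \<in> idx m then T (f x) (f y) else 0)"
proof (intro ext)
  fix x y
  show "mmul m (mtrans (PM m f)) (mmul m T (PM m f)) x y = (if x \<in> idx m \<and> y \<in> idx m then T (f x) (f y) else 0)"
  proof (cases "x \<in> idx m \<and> y \<in> idx m")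
    case True
    hence fy: "f y \<in> idx m" and fx: "f x \<in> idx m" using assms by auto
    have 1: "mmul m T (PM m f) z y = T z (f y)" if "z \<in> idx m" for z
    proof -
      have "mmul m T (PM m f) z y = (\<Sum>w\<in>idx m. T z w * (if w = f y then 1 else 0))"
        using True that by (auto simp: mmul_def PM_def intro!: sum.cong)
      also have "\<dots> = T z (f y)" using sum_delta_idx[OF fy] .
      finally show ?thesis .
    qed
    have "mmul m (mtrans (PM m f)) (mmul m T (PM m f)) x y
        = (\<Sum>z\<in>idx m. T z (f y) * (if z = f x then 1 else 0))"
      using True 1 by (auto simp: mmul_def PM_def mtrans_def intro!: sum.cong)
    also have "\<dots> = T (f x) (f y)" using sum_delta_idx[OF fx] .
    finally show ?thesis using True by simp
  qed (auto simp: mmul_def)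
qed

lemma Aut_PM_iff:
  assumes "bij_betw f (idx m) (idx m)"
  shows "PM m f \<in> Aut m (Tm m) \<longleftrightarrow> (\<forall>x\<in>idx m. \<forall>y\<in>idx m. leq m (f x) (f y) = leq m x y)"
proof -
  have im: "f ` idx m \<subseteq> idx m" using assms bij_betw_imp_surj_on by blast
  have e1: "PM m f \<in> Aut m (Tm m) \<longleftrightarrow> (\<lambda>x y. if x \<in> idx m \<and> y \<in> idx m then Tm m (f x) (f y) else 0) = Tm m"
    using perm_matrix_PM[OF assms] Aut_cond[OF im] by (simp add: Aut_def)
  have e2: "Tm m (f x) (f y) = Tm m x y \<longleftrightarrow> leq m (f y) (f x) = leq m y x" if "x \<in> idx m" "y \<in> idx m" for x y
  proof -
    have "f x \<in> idx m" "f y \<in> idx m" using im that by auto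
    then show ?thesis using that unfolding Tm_alt by simp
  qed
  have e3: "(\<lambda>x y. if x \<in> idx m \<and> y \<in> idx m then Tm m (f x) (f y) else 0) = Tm m
      \<longleftrightarrow> (\<forall>x\<in>idx m. \<forall>y\<in>idx m. Tm m (f x) (f y) = Tm m x y)"
  proof
    assume "(\<lambda>x y. if x \<in> idx m \<and> y \<in> idx m then Tm m (f x) (f y) else 0) = Tm m"
    note q = fun_cong[OF fun_cong[OF this]]
    show "\<forall>x\<in>idx m. \<forall>y\<in>idx m. Tm m (f x) (f y) = Tm m x y"
    proof (intro ballI)
      fix x y assume "x \<in> idx m" "y \<in> idx m"
      then show "Tm m (f x) (f y) = Tm m x y" using q[of x y] by simp
    qed
  next
    assume h: "\<forall>x\<in>idx m. \<forall>y\<in>idx m. Tm m (f x) (f y) = Tm m x y"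
    show "(\<lambda>x y. if x \<in> idx m \<and> y \<in> idx m then Tm m (f x) (f y) else 0) = Tm m"
    proof (intro ext)
      fix x y show "(if x \<in> idx m \<and> y \<in> idx m then Tm m (f x) (f y) else 0) = Tm m x y"
        using h by (simp add: Tm_def)
    qed
  qed
  have e4: "(\<forall>x\<in>idx m. \<forall>y\<in>idx m. Tm m (f x) (f y) = Tm m x y) \<longleftrightarrow>
     (\<forall>x\<in>idx m. \<forall>y\<in>idx m. leq m (f y) (f x) = leq m y x)"
    using e2 by (intro ball_cong refl) simp
  have e5: "(\<forall>x\<in>idx m. \<forall>y\<in>idx m. leq m (f y) (f x) = leq m y x) \<longleftrightarrow>
     (\<forall>x\<in>idx m. \<forall>y\<in>idx m. leq m (f x) (f y) = leq m x y)" by blast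
  show ?thesis unfolding e1 e3 e4 e5 ..
qed



definition Zr :: "nat \<Rightarrow> bool list" where "Zr m = replicate m False"
definition Ev :: "nat \<Rightarrow> nat \<Rightarrow> bool list" where "Ev m j = map (\<lambda>i. i = j) [0..<m]"

lemma Zr_idx[simp]: "Zr m \<in> idx m" by (simp add: Zr_def idx_def)
lemma Ev_idx[simp]: "Ev m j \<in> idx m" by (simp add: Ev_def idx_def)
lemma Ev_nth: "i < m \<Longrightarrow> Ev m j ! i = (i = j)" by (simp add: Ev_def)
lemma leq_Zr: "leq m (Zr m) x" by (simp add: leq_def Zr_def)
lemma leq_Zr_eq: "x \<in> idx m \<Longrightarrow> leq m x (Zr m) \<Longrightarrow> x = Zr m"
  by (auto simp: leq_def Zr_def idx_def intro!: nth_equalityI)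
lemma Ev_ne_Zr: "j < m \<Longrightarrow> Ev m j \<noteq> Zr m"
  by (metis Ev_nth Zr_def nth_replicate)
lemma leq_Ev: "x \<in> idx m \<Longrightarrow> j < m \<Longrightarrow> leq m (Ev m j) x = x ! j"
  by (auto simp: leq_def Ev_nth)
lemma Ev_inj: "a < m \<Longrightarrow> Ev m a = Ev m b \<Longrightarrow> a = b"
  by (metis Ev_nth)
lemma below_Ev: "v \<in> idx m \<Longrightarrow> j < m \<Longrightarrow> leq m v (Ev m j) \<Longrightarrow> v = Zr m \<or> v = Ev m j"
proof -
  assume v: "v \<in> idx m" and j: "j < m" and l: "leq m v (Ev m j)"
  show ?thesis
  proof (cases "v ! j")
    case True
    have "v ! i = Ev m j ! i" if "i < m" for i
      using l that True by (auto simp: leq_def Ev_nth)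
    then have "v = Ev m j" using v by (auto simp: idx_def Ev_def intro!: nth_equalityI)
    then show ?thesis by simp
  next
    case False
    have "v ! i = Zr m ! i" if "i < m" for i
      using l that False by (auto simp: leq_def Ev_nth Zr_def)
    then have "v = Zr m" using v by (auto simp: idx_def Zr_def intro!: nth_equalityI)
    then show ?thesis by simp
  qed
qed

lemma comb:
  assumes bij: "bij_betw h (idx m) (idx m)"
    and ord: "\<forall>x\<in>idx m. \<forall>y\<in>idx m. leq m (h x) (h y) = leq m x y"
  shows "\<exists>\<tau>. bij_betw \<tau> {..<m} {..<m} \<and> (\<forall>x\<in>idx m. \<forall>j<m. h x ! \<tau> j = x ! j)"
proof -
  have hin: "h x \<in> idx m" if "x \<in> idx m" for x using bij that bij_betwE by blast
  have inj: "inj_on h (idx m)" using bij bij_betw_def by blast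
  have surj: "\<exists>v\<in>idx m. h v = w" if "w \<in> idx m" for w
    using bij that by (metis bij_betw_iff_bijections)
  have hZ: "h (Zr m) = Zr m"
  proof -
    obtain v where v: "v \<in> idx m" "h v = Zr m" using surj[of "Zr m"] by auto
    have "leq m (h (Zr m)) (h v)" using ord[rule_format, OF Zr_idx v(1)] leq_Zr by simp
    then show ?thesis using leq_Zr_eq[OF hin[OF Zr_idx]] v(2) by simp
  qed
  have atom: "\<exists>k<m. h (Ev m j) = Ev m k" if j: "j < m" for j
  proof -
    have "h (Ev m j) \<noteq> Zr m" using hZ inj Ev_ne_Zr[OF j] by (metis Ev_idx Zr_idx inj_onD)
    have "\<exists>k<m. h (Ev m j) ! k"
    proof (rule ccontr)
      assume "\<not> (\<exists>k<m. h (Ev m j) ! k)"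
      moreover have "length (h (Ev m j)) = m" using hin[OF Ev_idx] by (simp add: idx_def)
      ultimately have "h (Ev m j) = Zr m"
        by (auto simp: Zr_def intro!: nth_equalityI)
      then show False using \<open>h (Ev m j) \<noteq> Zr m\<close> by simp
    qed
    then obtain k where k: "k < m" "h (Ev m j) ! k" by blast
    obtain v where v: "v \<in> idx m" "h v = Ev m k" using surj[of "Ev m k"] by auto
    have "leq m (h v) (h (Ev m j))" using v k leq_Ev hin by auto
    hence "leq m v (Ev m j)" using ord v by auto
    hence "v = Zr m \<or> v = Ev m j" using below_Ev v j by auto
    moreover have "v \<noteq> Zr m" using hZ v Ev_ne_Zr[OF k(1)] by auto
    ultimately show ?thesis using v k by auto
  qed
  define \<tau> where "\<tau> j = (SOME k. k < m \<and> h (Ev m j) = Ev m k)" for j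
  have tau: "\<tau> j < m \<and> h (Ev m j) = Ev m (\<tau> j)" if "j < m" for j
    unfolding \<tau>_def using someI_ex[OF atom[OF that]] .
  have tinj: "inj_on \<tau> {..<m}"
  proof (rule inj_onI)
    fix a b assume "a \<in> {..<m}" "b \<in> {..<m}" "\<tau> a = \<tau> b"
    then have "h (Ev m a) = h (Ev m b)" using tau by auto
    then have "Ev m a = Ev m b" using inj by (metis Ev_idx inj_onD)
    then show "a = b" using Ev_inj \<open>a \<in> {..<m}\<close> by auto
  qed
  have "\<tau> ` {..<m} = {..<m}"
    using endo_inj_surj[OF _ _ tinj] tau by auto
  then have "bij_betw \<tau> {..<m} {..<m}" using tinj by (simp add: bij_betw_def)
  moreover have "h x ! \<tau> j = x ! j" if "x \<in> idx m" "j < m" for x j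
  proof -
    have "x ! j = leq m (Ev m j) x" using leq_Ev that by auto
    also have "\<dots> = leq m (h (Ev m j)) (h x)" using ord that by auto
    also have "\<dots> = h x ! \<tau> j" using tau[OF that(2)] leq_Ev hin that by auto
    finally show ?thesis by simp
  qed
  ultimately show ?thesis by blast
qed



lemma gs_len: "length (gs m \<sigma> x) = m" by (simp add: gs_def)
lemma gs_idx[simp]: "gs m \<sigma> x \<in> idx m" by (simp add: gs_def idx_def)
lemma gs_nth: "j < m \<Longrightarrow> gs m \<sigma> x ! j = x ! (\<sigma> (Suc j) - 1)"
  by (simp add: gs_def del: upt_Suc)

lemma perm_range: "\<sigma> permutes {1..m} \<Longrightarrow> j < m \<Longrightarrow> 1 \<le> \<sigma> (Suc j) \<and> \<sigma> (Suc j) \<le> m"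
  using permutes_in_image[of \<sigma> "{1..m}" "Suc j"] by auto

lemma gs_comp:
  assumes s: "\<sigma> permutes {1..m}" and t: "\<tau> permutes {1..m}" and x: "x \<in> idx m"
  shows "gs m \<sigma> (gs m \<tau> x) = gs m (\<tau> \<circ> \<sigma>) x"
proof (rule nth_equalityI)
  show "length (gs m \<sigma> (gs m \<tau> x)) = length (gs m (\<tau> \<circ> \<sigma>) x)" by (simp add: gs_len)
  fix j assume "j < length (gs m \<sigma> (gs m \<tau> x))"
  then have j: "j < m" by (simp add: gs_len)
  have r: "1 \<le> \<sigma> (Suc j) \<and> \<sigma> (Suc j) \<le> m" using perm_range[OF s j] .
  then have "\<sigma> (Suc j) - 1 < m" "Suc (\<sigma> (Suc j) - 1) = \<sigma> (Suc j)" by auto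
  then show "gs m \<sigma> (gs m \<tau> x) ! j = gs m (\<tau> \<circ> \<sigma>) x ! j"
    using j by (simp add: gs_nth)
qed

lemma gs_id: "x \<in> idx m \<Longrightarrow> gs m id x = x"
  by (rule nth_equalityI) (auto simp: gs_len gs_nth idx_def)

lemma gs_bij:
  assumes s: "\<sigma> permutes {1..m}"
  shows "bij_betw (gs m \<sigma>) (idx m) (idx m)"
proof (rule bij_betw_byWitness[where f' = "gs m (inv_into UNIV \<sigma>)"])
  have si: "inv_into UNIV \<sigma> permutes {1..m}" using permutes_inv[OF s] .
  show "\<forall>a\<in>idx m. gs m (inv_into UNIV \<sigma>) (gs m \<sigma> a) = a"
    using gs_comp[OF si s] permutes_inv_o(1)[OF s] gs_id by simp
  show "\<forall>a'\<in>idx m. gs m \<sigma> (gs m (inv_into UNIV \<sigma>) a') = a'"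
    using gs_comp[OF s si] permutes_inv_o(2)[OF s] gs_id by simp
qed auto

lemma gs_ord:
  assumes s: "\<sigma> permutes {1..m}" and x: "x \<in> idx m" and y: "y \<in> idx m"
  shows "leq m (gs m \<sigma> x) (gs m \<sigma> y) = leq m x y"
proof
  assume h: "leq m x y"
  show "leq m (gs m \<sigma> x) (gs m \<sigma> y)" unfolding leq_def
  proof (intro allI impI)
    fix j assume j: "j < m" and xj: "gs m \<sigma> x ! j"
    have "\<sigma> (Suc j) - 1 < m" using perm_range[OF s j] by arith
    then show "gs m \<sigma> y ! j" using h xj j by (simp add: leq_def gs_nth)
  qed
next
  assume h: "leq m (gs m \<sigma> x) (gs m \<sigma> y)"
  show "leq m x y" unfolding leq_def
  proof (intro allI impI)
    fix i assume i: "i < m" and xi: "x ! i"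
    have si: "inv_into UNIV \<sigma> permutes {1..m}" using permutes_inv[OF s] .
    have "inv_into UNIV \<sigma> (Suc i) \<in> {1..m}" using permutes_in_image[OF si] i by auto
    define j where "j = inv_into UNIV \<sigma> (Suc i) - 1"
    have j: "j < m" "inv_into UNIV \<sigma> (Suc i) = Suc j"
      using \<open>inv_into UNIV \<sigma> (Suc i) \<in> {1..m}\<close> unfolding j_def by auto
    have "\<sigma> (Suc j) = Suc i" using j(2) permutes_inverses(1)[OF s, of "Suc i"] by simp
    then have "gs m \<sigma> x ! j = x ! i" "gs m \<sigma> y ! j = y ! i" using j(1) by (auto simp: gs_nth)
    then show "y ! i" using h j(1) xi by (auto simp: leq_def)
  qed
qed



lemma Psig_Aut: "\<sigma> permutes {1..m} \<Longrightarrow> Psig m \<sigma> \<in> Aut m (Tm m)"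
  unfolding Psig_PM using Aut_PM_iff[OF gs_bij] gs_ord by blast

lemma Aut_Psig:
  assumes P: "P \<in> Aut m (Tm m)"
  shows "\<exists>\<sigma>. \<sigma> permutes {1..m} \<and> P = Psig m \<sigma>"
proof -
  have "perm_matrix m P" using P by (simp add: Aut_def)
  then obtain f where f: "bij_betw f (idx m) (idx m)" and Pf: "P = PM m f"
    using perm_matrix_PM_ex by blast
  have ordf: "\<forall>x\<in>idx m. \<forall>y\<in>idx m. leq m (f x) (f y) = leq m x y"
    using Aut_PM_iff[OF f] P Pf by simp
  define g where "g = inv_into (idx m) f"
  have g: "bij_betw g (idx m) (idx m)" unfolding g_def using bij_betw_inv_into[OF f] .
  have injf: "inj_on f (idx m)" using f bij_betw_def by blast
  have fg: "f (g x) = x" if "x \<in> idx m" for x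
    unfolding g_def using f that by (metis bij_betw_inv_into_right)
  have gf: "g (f x) = x" if "x \<in> idx m" for x
    unfolding g_def using injf that by (rule inv_into_f_f)
  have gin: "g x \<in> idx m" if "x \<in> idx m" for x using g that bij_betwE by blast
  have ordg: "\<forall>x\<in>idx m. \<forall>y\<in>idx m. leq m (g x) (g y) = leq m x y"
  proof (intro ballI)
    fix x y assume "x \<in> idx m" "y \<in> idx m"
    then show "leq m (g x) (g y) = leq m x y"
      using ordf[rule_format, OF gin gin] fg by simp
  qed
  obtain \<tau> where tb: "bij_betw \<tau> {..<m} {..<m}" and tg: "\<forall>x\<in>idx m. \<forall>j<m. g x ! \<tau> j = x ! j"
    using comb[OF g ordg] by blast
  have fx: "f x ! j = x ! \<tau> j" if "x \<in> idx m" "j < m" for x j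
  proof -
    have "f x \<in> idx m" using f that bij_betwE by blast
    then have "g (f x) ! \<tau> j = f x ! j" using tg that by blast
    then show ?thesis using gf that by simp
  qed
  define \<sigma> where "\<sigma> k = (if k \<in> {1..m} then Suc (\<tau> (k - 1)) else k)" for k
  have tlt: "\<tau> j < m" if "j < m" for j using tb that bij_betwE by blast
  have tinj: "inj_on \<tau> {..<m}" using tb bij_betw_def by blast
  have sinj: "inj_on \<sigma> {1..m}"
  proof (rule inj_onI)
    fix a b assume a: "a \<in> {1..m}" and b: "b \<in> {1..m}" and e: "\<sigma> a = \<sigma> b"
    then have "\<tau> (a - 1) = \<tau> (b - 1)" by (simp add: \<sigma>_def)
    moreover have "a - 1 \<in> {..<m}" "b - 1 \<in> {..<m}" using a b by auto
    ultimately have "a - 1 = b - 1" using tinj inj_onD by metis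
    moreover have "1 \<le> a" "1 \<le> b" using a b by auto
    ultimately show "a = b" by arith
  qed
  have simg: "\<sigma> ` {1..m} \<subseteq> {1..m}"
  proof
    fix k assume "k \<in> \<sigma> ` {1..m}"
    then obtain a where a: "a \<in> {1..m}" "k = \<sigma> a" by blast
    then have "a - 1 < m" by auto
    then have "\<tau> (a - 1) < m" using tlt by blast
    then show "k \<in> {1..m}" using a by (simp add: \<sigma>_def)
  qed
  have "\<sigma> ` {1..m} = {1..m}" using endo_inj_surj[OF _ simg sinj] by simp
  then have "bij_betw \<sigma> {1..m} {1..m}" using sinj by (simp add: bij_betw_def)
  then have sp: "\<sigma> permutes {1..m}"
    by (rule bij_imp_permutes) (auto simp: \<sigma>_def)
  have "f x = gs m \<sigma> x" if x: "x \<in> idx m" for x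
  proof (rule nth_equalityI)
    have "f x \<in> idx m" using f x bij_betwE by blast
    then show "length (f x) = length (gs m \<sigma> x)" by (simp add: gs_len idx_def)
    fix j assume "j < length (f x)"
    then have j: "j < m" using \<open>f x \<in> idx m\<close> by (simp add: idx_def)
    have "\<sigma> (Suc j) = Suc (\<tau> j)" using j by (simp add: \<sigma>_def)
    then show "f x ! j = gs m \<sigma> x ! j" using fx[OF x j] j by (simp add: gs_nth)
  qed
  then have "P = Psig m \<sigma>" unfolding Pf Psig_PM by (rule PM_cong)
  then show ?thesis using sp by blast
qed

lemma Aut_eq: "Aut m (Tm m) = {Psig m \<sigma> | \<sigma>. \<sigma> permutes {1..m}}"
  using Aut_Psig Psig_Aut by blast

lemma Psig_inj: "inj_on (Psig m) {\<sigma>. \<sigma> permutes {1..m}}"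
proof (rule inj_onI)
  fix s t assume s: "s \<in> {\<sigma>. \<sigma> permutes {1..m}}" and t: "t \<in> {\<sigma>. \<sigma> permutes {1..m}}"
    and e: "Psig m s = Psig m t"
  have s': "s permutes {1..m}" and t': "t permutes {1..m}" using s t by auto
  have geq: "gs m s y = gs m t y" if "y \<in> idx m" for y
  proof -
    have "PM m (gs m s) (gs m s y) y = 1" using that by (simp add: PM_def)
    then have "PM m (gs m t) (gs m s y) y = 1" using e by (simp add: Psig_PM)
    then show ?thesis by (simp add: PM_def split: if_splits)
  qed
  show "s = t"
  proof
    fix k
    show "s k = t k"
    proof (cases "k \<in> {1..m}")
      case False
      then show ?thesis using permutes_not_in[OF s'] permutes_not_in[OF t'] by simp
    next
      case True
      define j where "j = k - 1"
      have j: "j < m" "Suc j = k" using True j_def by auto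
      have rs: "1 \<le> s k \<and> s k \<le> m" using perm_range[OF s' j(1)] j by simp
      have rt: "1 \<le> t k \<and> t k \<le> m" using perm_range[OF t' j(1)] j by simp
      define x where "x = Ev m (s k - 1)"
      have "gs m s x ! j = x ! (s k - 1)" using j by (simp add: gs_nth)
      also have "\<dots> = True"
      proof -
        have "s k - 1 < m" using rs by arith
        then show ?thesis by (simp add: x_def Ev_nth)
      qed
      finally have "gs m t x ! j" using geq[of x] by (simp add: x_def)
      then have "x ! (t k - 1)" using j by (simp add: gs_nth)
      moreover have "t k - 1 < m" using rt by arith
      ultimately have "t k - 1 = s k - 1" by (simp add: x_def Ev_nth)
      then show ?thesis using rs rt by arith
    qed
  qed
qed

lemma card_Aut: "card (Aut m (Tm m)) = fact m"
proof -
  have "Aut m (Tm m) = Psig m ` {\<sigma>. \<sigma> permutes {1..m}}" unfolding Aut_eq by blast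
  then have "card (Aut m (Tm m)) = card {\<sigma>. \<sigma> permutes {1..m}}"
    using card_image[OF Psig_inj] by simp
  also have "\<dots> = fact m" using card_permutations[of "{1..m}" m] by simp
  finally show ?thesis .
qed

lemma Psig_mult:
  assumes a: "a permutes {1..m}" and b: "b permutes {1..m}"
  shows "mmul m (Psig m a) (Psig m b) = Psig m (b \<circ> a)"
proof -
  have "mmul m (Psig m a) (Psig m b) = PM m (gs m a \<circ> gs m b)"
    unfolding Psig_PM by (rule mmul_PM) auto
  also have "\<dots> = PM m (gs m (b \<circ> a))"
    by (rule PM_cong) (simp add: gs_comp[OF a b])
  finally show ?thesis by (simp add: Psig_PM)
qed

lemma iso_part: "Aut_group m (Tm m) \<cong> sym_group m"
proof -
  define \<phi> where "\<phi> \<sigma> = Psig m (inv_into UNIV \<sigma>)" for \<sigma>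
  have "\<phi> \<in> iso (sym_group m) (Aut_group m (Tm m))"
  proof -
    have hom: "\<phi> \<in> hom (sym_group m) (Aut_group m (Tm m))"
    proof (rule homI)
      fix x assume "x \<in> carrier (sym_group m)"
      then have "inv_into UNIV x permutes {1..m}" by (simp add: sym_group_carrier permutes_inv)
      then show "\<phi> x \<in> carrier (Aut_group m (Tm m))"
        by (simp add: \<phi>_def Aut_group_def Psig_Aut)
    next
      fix x y assume x: "x \<in> carrier (sym_group m)" and y: "y \<in> carrier (sym_group m)"
      then have xp: "x permutes {1..m}" and yp: "y permutes {1..m}" by (auto simp: sym_group_carrier)
      have "inv_into UNIV (x \<circ> y) = inv_into UNIV y \<circ> inv_into UNIV x"
        using o_inv_distrib[OF permutes_bij[OF xp] permutes_bij[OF yp]] .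
      then show "\<phi> (x \<otimes>\<^bsub>sym_group m\<^esub> y) = \<phi> x \<otimes>\<^bsub>Aut_group m (Tm m)\<^esub> \<phi> y"
        using Psig_mult[OF permutes_inv[OF xp] permutes_inv[OF yp]]
        by (simp add: \<phi>_def Aut_group_def sym_group_mult)
    qed
    have bij: "bij_betw \<phi> (carrier (sym_group m)) (carrier (Aut_group m (Tm m)))"
    proof (rule bij_betw_imageI)
      show "inj_on \<phi> (carrier (sym_group m))"
      proof (rule inj_onI)
        fix x y assume "x \<in> carrier (sym_group m)" "y \<in> carrier (sym_group m)" "\<phi> x = \<phi> y"
        then have xp: "x permutes {1..m}" and yp: "y permutes {1..m}"
          and e: "Psig m (inv_into UNIV x) = Psig m (inv_into UNIV y)"
          by (auto simp: sym_group_carrier \<phi>_def)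
        have "inv_into UNIV x \<in> {\<sigma>. \<sigma> permutes {1..m}}" "inv_into UNIV y \<in> {\<sigma>. \<sigma> permutes {1..m}}"
          using permutes_inv[OF xp] permutes_inv[OF yp] by auto
        then have "inv_into UNIV x = inv_into UNIV y"
          using Psig_inj[of m] e unfolding inj_on_def by blast
        then show "x = y" using permutes_inv_inv[OF xp] permutes_inv_inv[OF yp] by metis
      qed
      show "\<phi> ` carrier (sym_group m) = carrier (Aut_group m (Tm m))"
      proof
        show "\<phi> ` carrier (sym_group m) \<subseteq> carrier (Aut_group m (Tm m))"
          using hom by (auto simp: hom_def)
        show "carrier (Aut_group m (Tm m)) \<subseteq> \<phi> ` carrier (sym_group m)"
        proof
          fix P assume "P \<in> carrier (Aut_group m (Tm m))"
          then obtain \<sigma> where sp: "\<sigma> permutes {1..m}" and P: "P = Psig m \<sigma>"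
            using Aut_Psig by (auto simp: Aut_group_def)
          have "P = \<phi> (inv_into UNIV \<sigma>)" using P permutes_inv_inv[OF sp] by (simp add: \<phi>_def)
          moreover have "inv_into UNIV \<sigma> \<in> carrier (sym_group m)"
            using permutes_inv[OF sp] by (simp add: sym_group_carrier)
          ultimately show "P \<in> \<phi> ` carrier (sym_group m)" by blast
        qed
      qed
    qed
    show ?thesis using hom bij by (simp add: iso_def)
  qed
  then have "sym_group m \<cong> Aut_group m (Tm m)" by (rule is_isoI)
  then show ?thesis by (rule group.iso_sym[OF sym_group_is_group])
qed

theorem mainTheorem12:
  fixes m :: nat
  shows "Aut m (Tm m) = {Psig m \<sigma> | \<sigma>. \<sigma> permutes {1..m}}
         \<and> Aut_group m (Tm m) \<cong> sym_group m
         \<and> card (Aut m (Tm m)) = fact m"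
  using Aut_eq iso_part card_Aut by blast

end
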